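(* Let $\Gamma$ be a rational graph of degree $m=-Z^2\ge 3$. Then its complexity $\sum_{v}(\mathrm{val}(v)-2)$, the sum over all vertices $v$ of valency $\mathrm{val}(v)\ge 3$, is at most $m-2$.
   Context: A rational graph is a finite tree with vertices $E_i$ weighted by integers $-b_i\le -2$, such that the symmetric matrix with diagonal entries $E_i\cdot E_i=-b_i$ and off-diagonal entries $E_i\cdot E_j=1$ if adjacent and $0$ otherwise is negative definite, and such that the fundamental cycle $Z$ (smallest nonzero integer cycle with $Z\cdot E_i\le0$ for all $i$) satisfies $p_a(Z)=0$, where $p_a(A)=1+\tfrac12(A\cdot A+\sum a_i(b_i-2))$ for $A=\sum a_iE_i$. The degree is $-Z^2$; for a rational graph $-Z^2-2=\sum z_i(b_i-2)$ where $Z=\sum z_iE_i$. Valency means the number of neighbours in the tree. *)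

theory Defs
  imports Complex_Main
begin

text \<open>A weighted graph: vertex set V, symmetric irreflexive adjacency E on V,
  weights b (vertex v has self-intersection -b v).  Cycles are integer
  functions on V (values outside V are irrelevant).\<close>

definition graph_ok :: "'a set \<Rightarrow> ('a \<Rightarrow> 'a \<Rightarrow> bool) \<Rightarrow> bool" where
  "graph_ok V E \<longleftrightarrow> finite V \<and> V \<noteq> {} \<and>
     (\<forall>u v. E u v \<longrightarrow> u \<in> V \<and> v \<in> V) \<and>
     (\<forall>u v. E u v \<longrightarrow> E v u) \<and> (\<forall>v. \<not> E v v)"

definition connected_in :: "'a set \<Rightarrow> ('a \<Rightarrow> 'a \<Rightarrow> bool) \<Rightarrow> bool" where
  "connected_in V E \<longleftrightarrow> (\<forall>u\<in>V. \<forall>v\<in>V. (\<lambda>x y. E x y)\<^sup>*\<^sup>* u v)"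

text \<open>A tree: a connected graph in which every edge is a bridge
  (removing it disconnects its endpoints), i.e. connected and acyclic.\<close>
definition is_tree :: "'a set \<Rightarrow> ('a \<Rightarrow> 'a \<Rightarrow> bool) \<Rightarrow> bool" where
  "is_tree V E \<longleftrightarrow> graph_ok V E \<and> connected_in V E \<and>
     (\<forall>u v. E u v \<longrightarrow>
        \<not> (\<lambda>x y. E x y \<and> {x, y} \<noteq> {u, v})\<^sup>*\<^sup>* u v)"

definition inter_coeff :: "('a \<Rightarrow> 'a \<Rightarrow> bool) \<Rightarrow> ('a \<Rightarrow> int) \<Rightarrow> 'a \<Rightarrow> 'a \<Rightarrow> int" where
  "inter_coeff E b i j = (if i = j then - b i else if E i j then 1 else 0)"

definition inter :: "'a set \<Rightarrow> ('a \<Rightarrow> 'a \<Rightarrow> bool) \<Rightarrow> ('a \<Rightarrow> int) \<Rightarrow> ('a \<Rightarrow> int) \<Rightarrow> ('a \<Rightarrow> int) \<Rightarrow> int" where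
  "inter V E b A B = (\<Sum>i\<in>V. \<Sum>j\<in>V. A i * B j * inter_coeff E b i j)"

definition neg_definite :: "'a set \<Rightarrow> ('a \<Rightarrow> 'a \<Rightarrow> bool) \<Rightarrow> ('a \<Rightarrow> int) \<Rightarrow> bool" where
  "neg_definite V E b \<longleftrightarrow> (\<forall>x :: 'a \<Rightarrow> real. (\<exists>i\<in>V. x i \<noteq> 0) \<longrightarrow>
      (\<Sum>i\<in>V. \<Sum>j\<in>V. x i * x j * real_of_int (inter_coeff E b i j)) < 0)"

definition basis_cycle :: "'a \<Rightarrow> 'a \<Rightarrow> int" where
  "basis_cycle i = (\<lambda>j. if j = i then 1 else 0)"

definition anti_nef :: "'a set \<Rightarrow> ('a \<Rightarrow> 'a \<Rightarrow> bool) \<Rightarrow> ('a \<Rightarrow> int) \<Rightarrow> ('a \<Rightarrow> int) \<Rightarrow> bool" where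
  "anti_nef V E b A \<longleftrightarrow> (\<exists>i\<in>V. A i \<noteq> 0) \<and>
      (\<forall>i\<in>V. inter V E b A (basis_cycle i) \<le> 0)"

definition fundamental_cycle :: "'a set \<Rightarrow> ('a \<Rightarrow> 'a \<Rightarrow> bool) \<Rightarrow> ('a \<Rightarrow> int) \<Rightarrow> ('a \<Rightarrow> int) \<Rightarrow> bool" where
  "fundamental_cycle V E b Z \<longleftrightarrow> anti_nef V E b Z \<and>
      (\<forall>A. anti_nef V E b A \<longrightarrow> (\<forall>i\<in>V. Z i \<le> A i))"

definition p_a :: "'a set \<Rightarrow> ('a \<Rightarrow> 'a \<Rightarrow> bool) \<Rightarrow> ('a \<Rightarrow> int) \<Rightarrow> ('a \<Rightarrow> int) \<Rightarrow> real" where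
  "p_a V E b A = 1 + real_of_int (inter V E b A A + (\<Sum>i\<in>V. A i * (b i - 2))) / 2"

definition valency :: "'a set \<Rightarrow> ('a \<Rightarrow> 'a \<Rightarrow> bool) \<Rightarrow> 'a \<Rightarrow> nat" where
  "valency V E v = card {w\<in>V. E v w}"

definition complexity :: "'a set \<Rightarrow> ('a \<Rightarrow> 'a \<Rightarrow> bool) \<Rightarrow> int" where
  "complexity V E = (\<Sum>v\<in>{v\<in>V. valency V E v \<ge> 3}. int (valency V E v) - 2)"

definition rational_graph :: "'a set \<Rightarrow> ('a \<Rightarrow> 'a \<Rightarrow> bool) \<Rightarrow> ('a \<Rightarrow> int) \<Rightarrow> ('a \<Rightarrow> int) \<Rightarrow> bool" where
  "rational_graph V E b Z \<longleftrightarrow> is_tree V E \<and> (\<forall>i\<in>V. b i \<ge> 2) \<and>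
     neg_definite V E b \<and> fundamental_cycle V E b Z \<and> p_a V E b Z = 0"

end

theory Submission
  imports Defs
begin

definition ind :: "'a set \<Rightarrow> 'a \<Rightarrow> int" where "ind X i = (if i \<in> X then 1 else 0)"
definition nb :: "('a \<Rightarrow> 'a \<Rightarrow> bool) \<Rightarrow> 'a set \<Rightarrow> 'a \<Rightarrow> int" where
  "nb E X v = (\<Sum>w\<in>X. if E v w then 1 else 0)"
definition e2 :: "('a \<Rightarrow> 'a \<Rightarrow> bool) \<Rightarrow> 'a set \<Rightarrow> int" where
  "e2 E X = (\<Sum>v\<in>X. nb E X v)"
definition qf :: "'a set \<Rightarrow> ('a \<Rightarrow> 'a \<Rightarrow> bool) \<Rightarrow> ('a \<Rightarrow> int) \<Rightarrow> ('a \<Rightarrow> int) \<Rightarrow> int" where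
  "qf V E b A = inter V E b A A + (\<Sum>i\<in>V. A i * (b i - 2))"

lemma coeff_sym:
  assumes "\<And>u v. E u v \<Longrightarrow> E v u"
  shows "inter_coeff E b i j = inter_coeff E b j i"
  using assms unfolding inter_coeff_def by auto

lemma inter_sym:
  assumes "\<And>u v. E u v \<Longrightarrow> E v u"
  shows "inter V E b A B = inter V E b B A"
proof -
  have "inter V E b A B = (\<Sum>i\<in>V. \<Sum>j\<in>V. B j * A i * inter_coeff E b j i)"
    unfolding inter_def
  proof (intro sum.cong refl)
    fix i j show "A i * B j * inter_coeff E b i j = B j * A i * inter_coeff E b j i"
      using coeff_sym[of E b i j] assms by (simp add: ac_simps)
  qed
  also have "\<dots> = (\<Sum>j\<in>V. \<Sum>i\<in>V. B j * A i * inter_coeff E b j i)" by (rule sum.swap)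
  finally show ?thesis unfolding inter_def .
qed

lemma inter_add_left: "inter V E b (\<lambda>i. A i + B i) C = inter V E b A C + inter V E b B C"
  unfolding inter_def by (simp add: distrib_right sum.distrib)

lemma inter_add_right: "inter V E b C (\<lambda>i. A i + B i) = inter V E b C A + inter V E b C B"
  unfolding inter_def by (simp add: distrib_left distrib_right sum.distrib)

lemma qf_add:
  assumes "\<And>u v. E u v \<Longrightarrow> E v u"
  shows "qf V E b (\<lambda>i. A i + B i) = qf V E b A + qf V E b B + 2 * inter V E b A B"
proof -
  have "inter V E b B A = inter V E b A B" by (rule inter_sym[OF assms])
  then show ?thesis unfolding qf_def inter_add_left inter_add_right
  by (simp add: distrib_right sum.distrib)
qed

lemma inter_basis:
  assumes "k \<in> V" "finite V"
  shows "inter V E b A (basis_cycle k) = (\<Sum>i\<in>V. A i * inter_coeff E b i k)"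
proof -
  have "\<And>i. (\<Sum>j\<in>V. A i * basis_cycle k j * inter_coeff E b i j) = A i * inter_coeff E b i k"
  proof -
    fix i
    have "(\<Sum>j\<in>V. A i * basis_cycle k j * inter_coeff E b i j)
        = (\<Sum>j\<in>V. if j = k then A i * inter_coeff E b i k else 0)"
      by (rule sum.cong) (auto simp: basis_cycle_def)
    then show "?thesis i" using assms by simp
  qed
  then show ?thesis unfolding inter_def by simp
qed

lemma qf_basis:
  assumes "k \<in> V" "finite V"
  shows "qf V E b (basis_cycle k) = -2"
proof -
  have "(\<Sum>i\<in>V. basis_cycle k i * inter_coeff E b i k) = (\<Sum>i\<in>V. if i = k then - b k else 0)"
    by (rule sum.cong) (auto simp: basis_cycle_def inter_coeff_def)
  moreover have "(\<Sum>i\<in>V. basis_cycle k i * (b i - 2)) = (\<Sum>i\<in>V. if i = k then b k - 2 else 0)"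
    by (rule sum.cong) (auto simp: basis_cycle_def)
  ultimately show ?thesis using assms unfolding qf_def inter_basis[OF assms] by simp
qed

lemma sum_ind:
  assumes "X \<subseteq> V" "finite V"
  shows "(\<Sum>i\<in>V. ind X i * f i) = (\<Sum>i\<in>X. f i)"
proof -
  have "(\<Sum>i\<in>V. ind X i * f i) = (\<Sum>i\<in>V. if i \<in> X then f i else 0)"
    by (rule sum.cong) (auto simp: ind_def)
  also have "\<dots> = sum f (V \<inter> X)" using assms by (simp add: sum.inter_restrict)
  also have "V \<inter> X = X" using assms by auto
  finally show ?thesis .
qed

lemma coeff_row:
  assumes "finite Y" "\<not> E i i"
  shows "(\<Sum>j\<in>Y. inter_coeff E b i j) = nb E Y i - (if i \<in> Y then b i else 0)"
proof -
  have "\<And>j. inter_coeff E b i j = (if E i j then 1 else 0) - (if i = j then b i else 0)"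
    using assms by (auto simp: inter_coeff_def)
  then have "(\<Sum>j\<in>Y. inter_coeff E b i j) = (\<Sum>j\<in>Y. (if E i j then 1 else 0) - (if i = j then b i else 0))"
    by simp
  also have "\<dots> = nb E Y i - (if i \<in> Y then b i else 0)"
    using assms by (simp add: sum_subtractf nb_def)
  finally show ?thesis .
qed

lemma inter_ind:
  assumes "X \<subseteq> V" "Y \<subseteq> V" "finite V" "\<And>v. \<not> E v v"
  shows "inter V E b (ind X) (ind Y) = (\<Sum>i\<in>X. nb E Y i - (if i \<in> Y then b i else 0))"
proof -
  have "inter V E b (ind X) (ind Y) = (\<Sum>i\<in>V. ind X i * (\<Sum>j\<in>V. ind Y j * inter_coeff E b i j))"
    unfolding inter_def by (simp add: sum_distrib_left ac_simps)
  also have "\<dots> = (\<Sum>i\<in>V. ind X i * (\<Sum>j\<in>Y. inter_coeff E b i j))"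
    using sum_ind[OF assms(2,3)] by simp
  also have "\<dots> = (\<Sum>i\<in>X. (\<Sum>j\<in>Y. inter_coeff E b i j))"
    using sum_ind[OF assms(1,3)] by simp
  also have "\<dots> = (\<Sum>i\<in>X. nb E Y i - (if i \<in> Y then b i else 0))"
  proof (rule sum.cong[OF refl])
    fix i show "(\<Sum>j\<in>Y. inter_coeff E b i j) = nb E Y i - (if i \<in> Y then b i else 0)"
      by (rule coeff_row) (use assms finite_subset[OF assms(2,3)] in auto)
  qed
  finally show ?thesis .
qed

lemma nb_swap:
  assumes "finite A" "finite B" "\<And>u v. E u v \<Longrightarrow> E v u"
  shows "(\<Sum>u\<in>A. nb E B u) = (\<Sum>w\<in>B. nb E A w)"
proof -
  have "(\<Sum>u\<in>A. nb E B u) = (\<Sum>u\<in>A. \<Sum>w\<in>B. if E w u then 1 else 0)"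
    unfolding nb_def by (intro sum.cong refl) (auto dest: assms(3))
  also have "\<dots> = (\<Sum>w\<in>B. \<Sum>u\<in>A. if E w u then 1 else 0)" by (rule sum.swap)
  finally show ?thesis unfolding nb_def .
qed

lemma qf_ind:
  assumes "X \<subseteq> V" "finite V" "\<And>v. \<not> E v v"
  shows "qf V E b (ind X) = e2 E X - 2 * int (card X)"
proof -
  have "(\<Sum>i\<in>V. ind X i * (b i - 2)) = (\<Sum>i\<in>X. b i - 2)" by (rule sum_ind[OF assms(1,2)])
  moreover have "inter V E b (ind X) (ind X) = (\<Sum>i\<in>X. nb E X i - b i)"
    by (subst inter_ind) (use assms in auto)
  ultimately show ?thesis unfolding qf_def e2_def
    by (simp add: sum_subtractf)
qed

lemma valency_nb:
  assumes "finite V"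
  shows "int (valency V E v) = nb E V v"
  unfolding valency_def nb_def using assms
  by (simp add: sum.inter_filter[symmetric])

lemma rtranclp_cross:
  assumes "R\<^sup>*\<^sup>* u v" "P u" "\<not> P v"
  shows "\<exists>x y. R x y \<and> P x \<and> \<not> P y"
  using assms by (induction rule: rtranclp_induct) auto

lemma qf_cong:
  assumes "\<forall>i\<in>V. A i = B i"
  shows "qf V E b A = qf V E b B"
  unfolding qf_def inter_def using assms by simp

locale rg =
  fixes V :: "'a set" and E :: "'a \<Rightarrow> 'a \<Rightarrow> bool" and b Z :: "'a \<Rightarrow> int"
  assumes rat: "rational_graph V E b Z"
begin

lemma gok: "graph_ok V E" using rat by (simp add: rational_graph_def is_tree_def)
lemma fin: "finite V" using gok by (simp add: graph_ok_def)
lemma ne: "V \<noteq> {}" using gok by (simp add: graph_ok_def)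
lemma inV: "E u v \<Longrightarrow> u \<in> V \<and> v \<in> V" using gok by (simp add: graph_ok_def)
lemma sym: "E u v \<Longrightarrow> E v u" using gok by (simp add: graph_ok_def)
lemma irr: "\<not> E v v" using gok by (simp add: graph_ok_def)
lemma conn: "u \<in> V \<Longrightarrow> v \<in> V \<Longrightarrow> E\<^sup>*\<^sup>* u v"
  using rat by (simp add: rational_graph_def is_tree_def connected_in_def)
lemma b2: "i \<in> V \<Longrightarrow> b i \<ge> 2" using rat by (simp add: rational_graph_def)
lemma nd: "neg_definite V E b" using rat by (simp add: rational_graph_def)
lemma anti: "i \<in> V \<Longrightarrow> inter V E b Z (basis_cycle i) \<le> 0"
  using rat by (simp add: rational_graph_def fundamental_cycle_def anti_nef_def)
lemma nz: "\<exists>i\<in>V. Z i \<noteq> 0"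
  using rat by (simp add: rational_graph_def fundamental_cycle_def anti_nef_def)
lemma minZ: "anti_nef V E b A \<Longrightarrow> i \<in> V \<Longrightarrow> Z i \<le> A i"
  using rat by (simp add: rational_graph_def fundamental_cycle_def)
lemma qZ: "qf V E b Z = -2"
proof -
  have "p_a V E b Z = 0" using rat by (simp add: rational_graph_def)
  then have "real_of_int (inter V E b Z Z + (\<Sum>i\<in>V. Z i * (b i - 2))) = -2"
    unfolding p_a_def
  proof -
    have gen: "\<And>r::real. 1 + r / 2 = 0 \<Longrightarrow> r = -2" by simp
    assume "1 + real_of_int (inter V E b Z Z + (\<Sum>i\<in>V. Z i * (b i - 2))) / 2 = 0"
    then show ?thesis by (rule gen)
  qed
  then show ?thesis unfolding qf_def by linarith
qed

lemma coeff_nonneg: "i \<noteq> j \<Longrightarrow> inter_coeff E b i j \<ge> 0"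
  by (simp add: inter_coeff_def)

lemma Z_nonneg: assumes "i \<in> V" shows "Z i \<ge> 0"
proof (rule ccontr)
  define N where "N = (\<lambda>i. max 0 (- Z i))"
  assume "\<not> Z i \<ge> 0"
  then have Nne: "\<exists>i\<in>V. real_of_int (N i) \<noteq> 0" using assms by (intro bexI[of _ i]) (auto simp: N_def)
  have "(\<Sum>i\<in>V. \<Sum>j\<in>V. real_of_int (N i) * real_of_int (N j) * real_of_int (inter_coeff E b i j)) < 0"
    using nd[unfolded neg_definite_def, rule_format, of "\<lambda>i. real_of_int (N i)"] Nne by simp
  moreover have "real_of_int (\<Sum>i\<in>V. \<Sum>j\<in>V. N i * N j * inter_coeff E b i j)
     = (\<Sum>i\<in>V. \<Sum>j\<in>V. real_of_int (N i) * real_of_int (N j) * real_of_int (inter_coeff E b i j))"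
    by simp
  ultimately have "real_of_int (\<Sum>i\<in>V. \<Sum>j\<in>V. N i * N j * inter_coeff E b i j) < 0" by linarith
  then have negI: "(\<Sum>i\<in>V. \<Sum>j\<in>V. N i * N j * inter_coeff E b i j) < 0"
    by (simp only: of_int_less_0_iff)
  have le0: "(\<Sum>j\<in>V. N j * inter V E b Z (basis_cycle j)) \<le> 0"
    by (rule sum_nonpos) (auto simp: N_def intro!: mult_nonneg_nonpos anti)
  have "(\<Sum>j\<in>V. N j * inter V E b Z (basis_cycle j)) = (\<Sum>j\<in>V. \<Sum>i\<in>V. Z i * N j * inter_coeff E b i j)"
    by (intro sum.cong refl) (simp add: inter_basis fin sum_distrib_left ac_simps)
  also have "\<dots> = (\<Sum>i\<in>V. \<Sum>j\<in>V. Z i * N j * inter_coeff E b i j)" by (rule sum.swap)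
  finally have eq: "(\<Sum>j\<in>V. N j * inter V E b Z (basis_cycle j)) = (\<Sum>i\<in>V. \<Sum>j\<in>V. Z i * N j * inter_coeff E b i j)" .
  have ge: "(\<Sum>i\<in>V. \<Sum>j\<in>V. (Z i + N i) * N j * inter_coeff E b i j) \<ge> 0"
  proof (intro sum_nonneg)
    fix i j
    show "(Z i + N i) * N j * inter_coeff E b i j \<ge> 0"
    proof (cases "i = j")
      case True then show ?thesis by (auto simp: N_def max_def)
    next
      case False then show ?thesis using coeff_nonneg[OF False] by (auto simp: N_def max_def)
    qed
  qed
  have "(\<Sum>i\<in>V. \<Sum>j\<in>V. (Z i + N i) * N j * inter_coeff E b i j)
      = (\<Sum>i\<in>V. \<Sum>j\<in>V. Z i * N j * inter_coeff E b i j) + (\<Sum>i\<in>V. \<Sum>j\<in>V. N i * N j * inter_coeff E b i j)"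
    by (simp add: distrib_right sum.distrib)
  then show False using ge negI le0 eq by linarith
qed

lemma Z_pos: assumes "i \<in> V" shows "Z i \<ge> 1"
proof (rule ccontr)
  assume "\<not> Z i \<ge> 1"
  then have zi: "Z i = 0" using Z_nonneg[OF assms] by simp
  obtain u where u: "u \<in> V" "Z u \<noteq> 0" using nz by blast
  have "E\<^sup>*\<^sup>* i u" using conn assms u by simp
  then obtain x y where xy: "E x y" "Z x = 0" "Z y \<noteq> 0"
    using rtranclp_cross[of E i u "\<lambda>x. Z x = 0"] zi u by blast
  have xV: "x \<in> V" and yV: "y \<in> V" using inV xy by auto
  have ypos: "Z y > 0" using Z_nonneg[OF yV] xy by simp
  have cyx: "inter_coeff E b y x = 1" using xy sym irr by (auto simp: inter_coeff_def)
  have "Z y * inter_coeff E b y x \<le> (\<Sum>j\<in>V. Z j * inter_coeff E b j x)"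
  proof (rule member_le_sum[OF yV _ fin])
    fix j assume "j \<in> V - {y}"
    then show "0 \<le> Z j * inter_coeff E b j x"
      using Z_nonneg coeff_nonneg[of j x] xy by (cases "j = x") auto
  qed
  then have "inter V E b Z (basis_cycle x) > 0"
    using inter_basis[OF xV fin] cyx ypos by simp
  then show False using anti[OF xV] by simp
qed

lemma lemA_aux:
  "nat (\<Sum>i\<in>V. Z i - D i) = n \<Longrightarrow> (\<forall>i\<in>V. 0 \<le> D i \<and> D i \<le> Z i) \<Longrightarrow> (\<exists>i\<in>V. D i \<noteq> 0)
   \<Longrightarrow> qf V E b D \<le> -2"
proof (induction n arbitrary: D rule: less_induct)
  case (less n D)
  show ?case
  proof (cases "\<forall>k\<in>V. inter V E b D (basis_cycle k) \<le> 0")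
    case True
    then have "anti_nef V E b D" using less.prems by (auto simp: anti_nef_def)
    then have "\<forall>i\<in>V. D i = Z i" using minZ less.prems by force
    then have "qf V E b D = qf V E b Z" by (rule qf_cong)
    then show ?thesis using qZ by simp
  next
    case False
    then obtain k where k: "k \<in> V" "inter V E b D (basis_cycle k) > 0" by force
    have Dk: "D k < Z k"
    proof (rule ccontr)
      assume "\<not> D k < Z k"
      then have dk: "D k = Z k" using less.prems k by force
      have "inter V E b Z (basis_cycle k) - inter V E b D (basis_cycle k)
          = (\<Sum>i\<in>V. (Z i - D i) * inter_coeff E b i k)"
        by (simp add: inter_basis[OF k(1) fin] sum_subtractf left_diff_distrib)
      also have "\<dots> \<ge> 0"
      proof (rule sum_nonneg)
        fix i assume iV: "i \<in> V"
        show "0 \<le> (Z i - D i) * inter_coeff E b i k"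
          using dk less.prems iV coeff_nonneg[of i k] by (cases "i = k") auto
      qed
      finally show False using k anti[OF k(1)] by simp
    qed
    define D' where "D' = (\<lambda>i. D i + basis_cycle k i)"
    have "qf V E b D' = qf V E b D + qf V E b (basis_cycle k) + 2 * inter V E b D (basis_cycle k)"
      unfolding D'_def by (rule qf_add) (rule sym)
    then have qle: "qf V E b D \<le> qf V E b D'" using k qf_basis[OF k(1) fin] by simp
    have prem: "\<forall>i\<in>V. 0 \<le> D' i \<and> D' i \<le> Z i"
      using less.prems Dk by (auto simp: D'_def basis_cycle_def)
    have nz': "\<exists>i\<in>V. D' i \<noteq> 0" using k less.prems by (auto simp: D'_def basis_cycle_def intro!: bexI[of _ k])
    have "(\<Sum>i\<in>V. Z i - D' i) = (\<Sum>i\<in>V. Z i - D i) - (\<Sum>i\<in>V. basis_cycle k i)"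
      by (simp add: D'_def sum_subtractf[symmetric] algebra_simps)
    also have "(\<Sum>i\<in>V. basis_cycle k i) = 1" using k fin by (simp add: basis_cycle_def)
    finally have s1: "(\<Sum>i\<in>V. Z i - D' i) = (\<Sum>i\<in>V. Z i - D i) - 1" .
    have "Z k - D k \<le> (\<Sum>i\<in>V. Z i - D i)"
      by (rule member_le_sum[OF k(1) _ fin]) (use less.prems in auto)
    then have "nat (\<Sum>i\<in>V. Z i - D' i) < n" using s1 Dk less.prems(1) by linarith
    then have "qf V E b D' \<le> -2" using less.IH prem nz' by blast
    then show ?thesis using qle by simp
  qed
qed

lemma lemA: "(\<forall>i\<in>V. 0 \<le> D i \<and> D i \<le> Z i) \<Longrightarrow> (\<exists>i\<in>V. D i \<noteq> 0) \<Longrightarrow> qf V E b D \<le> -2"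
  using lemA_aux by blast

lemma e2_insert:
  assumes "finite X" "w \<notin> X"
  shows "e2 E (insert w X) = e2 E X + 2 * nb E X w"
proof -
  have nbins: "\<And>u. nb E (insert w X) u = (if E u w then 1 else 0) + nb E X u"
    using assms by (simp add: nb_def)
  have s: "(\<Sum>u\<in>X. (if E u w then 1 else 0)) = nb E X w"
    unfolding nb_def by (intro sum.cong refl) (auto dest: sym)
  have "e2 E (insert w X) = nb E (insert w X) w + (\<Sum>u\<in>X. nb E (insert w X) u)"
    using assms by (simp add: e2_def)
  also have "\<dots> = nb E X w + ((\<Sum>u\<in>X. (if E u w then 1 else 0)) + e2 E X)"
    by (simp add: nbins irr sum.distrib e2_def)
  finally show ?thesis using s by simp
qed

lemma grow: "k \<ge> 1 \<Longrightarrow> k \<le> card V \<Longrightarrow> \<exists>X\<subseteq>V. card X = k \<and> e2 E X \<ge> 2 * int k - 2"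
proof (induction k)
  case 0 then show ?case by simp
next
  case (Suc k)
  show ?case
  proof (cases "k = 0")
    case True
    obtain v where v: "v \<in> V" using ne by blast
    have "e2 E {v} = 0" by (simp add: e2_def nb_def irr)
    then show ?thesis using True v by (intro exI[of _ "{v}"]) auto
  next
    case False
    then obtain X where X: "X \<subseteq> V" "card X = k" "e2 E X \<ge> 2 * int k - 2"
      using Suc by auto
    have finX: "finite X" using X(1) fin finite_subset by blast
    have "X \<noteq> V" using X(2) Suc.prems by auto
    then obtain y where y: "y \<in> V" "y \<notin> X" using X(1) by blast
    obtain x where x: "x \<in> X" using False X(2) by fastforce
    have "E\<^sup>*\<^sup>* x y" using conn x y X(1) by blast
    then obtain a w where aw: "E a w" "a \<in> X" "w \<notin> X"
      using rtranclp_cross[of E x y "\<lambda>u. u \<in> X"] x y by blast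
    have wV: "w \<in> V" using inV aw by blast
    have "1 \<le> nb E X w"
      unfolding nb_def
    proof -
      have "(if E w a then 1 else 0) \<le> (\<Sum>u\<in>X. if E w u then 1 else (0::int))"
        by (rule member_le_sum[OF aw(2)]) (use finX in auto)
      then show "1 \<le> (\<Sum>u\<in>X. if E w u then 1 else (0::int))" using aw sym by auto
    qed
    then have "e2 E (insert w X) \<ge> 2 * int (Suc k) - 2"
      using e2_insert[OF finX aw(3)] X(3) by simp
    moreover have "card (insert w X) = Suc k" using finX aw(3) X(2) by simp
    ultimately show ?thesis using X(1) wV by (intro exI[of _ "insert w X"]) auto
  qed
qed

lemma e2V: "e2 E V \<ge> 2 * int (card V) - 2"
proof -
  have "card V \<ge> 1" using fin ne by (simp add: Suc_le_eq card_gt_0_iff)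
  then obtain X where X: "X \<subseteq> V" "card X = card V" "e2 E X \<ge> 2 * int (card V) - 2"
    using grow by blast
  have "X = V" using card_subset_eq[OF fin X(1,2)] .
  then show ?thesis using X by simp
qed


lemma nb_union:
  assumes "A \<inter> B = {}" "finite A" "finite B"
  shows "nb E (A \<union> B) u = nb E A u + nb E B u"
  unfolding nb_def using assms by (simp add: sum.union_disjoint)

lemma nb_mono:
  assumes "A \<subseteq> B" "finite B"
  shows "nb E A u \<le> nb E B u"
  unfolding nb_def by (rule sum_mono2) (use assms in auto)

lemma nb_nonneg: "nb E A u \<ge> 0"
  unfolding nb_def by (rule sum_nonneg) auto

lemma F2:
  assumes "X \<subseteq> V" "X \<noteq> {}"
  shows "e2 E X \<le> 2 * int (card X) - 2"
proof -
  have "qf V E b (ind X) \<le> -2"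
  proof (rule lemA)
    show "\<forall>i\<in>V. 0 \<le> ind X i \<and> ind X i \<le> Z i" using Z_pos Z_nonneg by (auto simp: ind_def)
    show "\<exists>i\<in>V. ind X i \<noteq> 0" using assms by (auto simp: ind_def)
  qed
  moreover have "qf V E b (ind X) = e2 E X - 2 * int (card X)"
    by (rule qf_ind) (use assms fin irr in auto)
  ultimately show ?thesis by simp
qed

lemma F3:
  assumes "X \<subseteq> V" "\<forall>x\<in>X. Z x \<ge> 2"
  shows "e2 E V - 2 * int (card V) + (e2 E X - 2 * int (card X)) + 2 * (\<Sum>x\<in>X. nb E V x - b x) \<le> -2"
proof -
  have finX: "finite X" using assms fin finite_subset by blast
  have "qf V E b (\<lambda>i. ind V i + ind X i) \<le> -2"
  proof (rule lemA)
    show "\<forall>i\<in>V. 0 \<le> ind V i + ind X i \<and> ind V i + ind X i \<le> Z i"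
      using Z_pos assms by (auto simp: ind_def)
    show "\<exists>i\<in>V. ind V i + ind X i \<noteq> 0" using ne by (auto simp: ind_def)
  qed
  moreover have "qf V E b (\<lambda>i. ind V i + ind X i) = qf V E b (ind V) + qf V E b (ind X) + 2 * inter V E b (ind V) (ind X)"
    by (rule qf_add) (rule sym)
  moreover have "qf V E b (ind V) = e2 E V - 2 * int (card V)"
    by (rule qf_ind) (use fin irr in auto)
  moreover have "qf V E b (ind X) = e2 E X - 2 * int (card X)"
    by (rule qf_ind) (use assms fin irr in auto)
  moreover have "inter V E b (ind V) (ind X) = (\<Sum>x\<in>X. nb E V x - b x)"
  proof -
    have "inter V E b (ind V) (ind X) = (\<Sum>i\<in>V. nb E X i - (if i \<in> X then b i else 0))"
      by (rule inter_ind) (use assms fin irr in auto)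
    also have "\<dots> = (\<Sum>i\<in>V. nb E X i) - (\<Sum>i\<in>V. if i \<in> X then b i else 0)"
      by (simp add: sum_subtractf)
    also have "(\<Sum>i\<in>V. nb E X i) = (\<Sum>x\<in>X. nb E V x)"
      by (rule nb_swap) (use fin finX sym in auto)
    also have "(\<Sum>i\<in>V. if i \<in> X then b i else 0) = sum b (V \<inter> X)"
      using fin by (simp add: sum.inter_restrict)
    also have "V \<inter> X = X" using assms by auto
    finally show ?thesis by (simp add: sum_subtractf)
  qed
  ultimately show ?thesis by simp
qed

lemma anti_nb:
  assumes "v \<in> V"
  shows "(\<Sum>i\<in>V. if E v i then Z i else 0) \<le> b v * Z v"
proof -
  have "\<And>i. Z i * inter_coeff E b i v = (if E v i then Z i else 0) - (if i = v then b v * Z v else 0)"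
    using irr by (auto simp: inter_coeff_def dest: sym)
  then have "inter V E b Z (basis_cycle v) = (\<Sum>i\<in>V. (if E v i then Z i else 0) - (if i = v then b v * Z v else 0))"
    using inter_basis[OF assms fin] by simp
  also have "\<dots> = (\<Sum>i\<in>V. if E v i then Z i else 0) - b v * Z v"
    using assms fin by (simp add: sum_subtractf)
  finally show ?thesis using anti[OF assms] by simp
qed

lemma main:
  assumes b3: "\<exists>v\<in>V. b v \<ge> 3"
  shows "complexity V E \<le> (\<Sum>i\<in>V. Z i * (b i - 2))"
proof -
  define S where "S = {v\<in>V. Z v \<ge> 2 \<and> nb E V v \<ge> 2}"
  define N where "N = {v\<in>V. Z v < 2 \<and> nb E V v \<ge> 2}"
  define W where "W = {v\<in>V. nb E V v \<ge> 2}"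
  define L where "L = {v\<in>V. nb E V v < 2}"
  define f where "f = (\<lambda>v. if nb E V v \<ge> 3 then nb E V v - 2 else 0)"
  define g where "g = (\<lambda>v. Z v * (b v - 2) - f v)"
  have finS: "finite S" and finN: "finite N" and finW: "finite W" and finL: "finite L"
    using fin by (auto simp: S_def N_def W_def L_def)
  have SV: "S \<subseteq> V" and NV: "N \<subseteq> V" and WV: "W \<subseteq> V" and LV: "L \<subseteq> V"
    by (auto simp: S_def N_def W_def L_def)
  have WSN: "W = S \<union> N" and SN: "S \<inter> N = {}" by (auto simp: S_def N_def W_def)
  have VWL: "V = W \<union> L" and WL: "W \<inter> L = {}" by (auto simp: W_def L_def)
  have cV: "int (card V) = int (card S) + int (card N) + int (card L)"
  proof -
    have "card W = card S + card N" unfolding WSN using SN finS finN by (simp add: card_Un_disjoint)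
    moreover have "card V = card W + card L" by (subst VWL) (use WL finW finL in \<open>simp add: card_Un_disjoint\<close>)
    ultimately show ?thesis by simp
  qed
  have cx: "complexity V E = (\<Sum>v\<in>V. f v)"
  proof -
    have "complexity V E = (\<Sum>v\<in>V. if valency V E v \<ge> 3 then int (valency V E v) - 2 else 0)"
      unfolding complexity_def using fin by (simp add: sum.inter_filter)
    also have "\<dots> = (\<Sum>v\<in>V. f v)"
    proof (rule sum.cong[OF refl])
      fix v assume "v \<in> V"
      have "int (valency V E v) = nb E V v" by (rule valency_nb[OF fin])
      moreover have "(valency V E v \<ge> 3) = (int (valency V E v) \<ge> 3)" by simp
      ultimately show "(if valency V E v \<ge> 3 then int (valency V E v) - 2 else 0) = f v"
        unfolding f_def by simp
    qed
    finally show ?thesis .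
  qed
  have sumV: "(\<Sum>v\<in>V. g v) = (\<Sum>v\<in>S. g v) + (\<Sum>v\<in>N. g v) + (\<Sum>v\<in>L. g v)"
  proof -
    have "(\<Sum>v\<in>V. g v) = (\<Sum>v\<in>W. g v) + (\<Sum>v\<in>L. g v)"
      by (subst VWL) (use WL finW finL in \<open>simp add: sum.union_disjoint\<close>)
    moreover have "(\<Sum>v\<in>W. g v) = (\<Sum>v\<in>S. g v) + (\<Sum>v\<in>N. g v)"
      unfolding WSN using SN finS finN by (simp add: sum.union_disjoint)
    ultimately show ?thesis by simp
  qed
  have gS: "(\<Sum>v\<in>S. g v) \<ge> (\<Sum>v\<in>S. b v - nb E V v) + (\<Sum>v\<in>S. b v - 2)"
  proof -
    have "(\<Sum>v\<in>S. (b v - nb E V v) + (b v - 2)) \<le> (\<Sum>v\<in>S. g v)"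
    proof (rule sum_mono)
      fix v assume v: "v \<in> S"
      then have z2: "Z v \<ge> 2" and bv: "b v - 2 \<ge> 0" and n2: "nb E V v \<ge> 2"
        using b2 by (auto simp: S_def)
      have "2 * (b v - 2) \<le> Z v * (b v - 2)" using mult_right_mono[OF z2 bv] .
      moreover have "f v = nb E V v - 2" using n2 by (auto simp: f_def)
      ultimately show "(b v - nb E V v) + (b v - 2) \<le> g v" by (simp add: g_def)
    qed
    then show ?thesis by (simp only: sum.distrib)
  qed
  have gN: "(\<Sum>v\<in>N. g v) \<ge> (\<Sum>v\<in>N. nb E S v)"
  proof (rule sum_mono)
    fix v assume v: "v \<in> N"
    then have vV: "v \<in> V" and z1: "Z v = 1" and n2: "nb E V v \<ge> 2"
      using Z_pos by (auto simp: N_def, fastforce)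
    have "(\<Sum>i\<in>V. (if E v i then 1 else 0) + ind S i * (if E v i then 1 else 0)) \<le> (\<Sum>i\<in>V. if E v i then Z i else 0)"
    proof (rule sum_mono)
      fix i assume "i \<in> V"
      then show "(if E v i then 1 else 0) + ind S i * (if E v i then 1 else 0) \<le> (if E v i then Z i else 0)"
        using Z_pos[of i] by (auto simp: ind_def S_def)
    qed
    also have "\<dots> \<le> b v * Z v" by (rule anti_nb[OF vV])
    finally have "(\<Sum>i\<in>V. (if E v i then 1 else 0)) + (\<Sum>i\<in>V. ind S i * (if E v i then 1 else 0)) \<le> b v"
      using z1 by (simp add: sum.distrib)
    moreover have "(\<Sum>i\<in>V. ind S i * (if E v i then 1 else 0)) = nb E S v"
      unfolding nb_def by (rule sum_ind[OF SV fin])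
    ultimately have "nb E V v + nb E S v \<le> b v" unfolding nb_def by simp
    moreover have "f v = nb E V v - 2" using n2 by (auto simp: f_def)
    ultimately show "nb E S v \<le> g v" using z1 by (simp add: g_def)
  qed
  have gL: "(\<Sum>v\<in>L. g v) \<ge> (\<Sum>v\<in>L. b v - 2)"
  proof (rule sum_mono)
    fix v assume v: "v \<in> L"
    then have z1: "Z v \<ge> 1" and bv: "b v - 2 \<ge> 0" and n2: "nb E V v < 2"
      using b2 Z_pos by (auto simp: L_def)
    have "1 * (b v - 2) \<le> Z v * (b v - 2)" using mult_right_mono[OF z1 bv] .
    moreover have "f v = 0" using n2 by (auto simp: f_def)
    ultimately show "b v - 2 \<le> g v" by (simp add: g_def)
  qed
  have f3: "e2 E V - 2 * int (card V) + (e2 E S - 2 * int (card S)) + 2 * (\<Sum>x\<in>S. nb E V x - b x) \<le> -2"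
    by (rule F3) (use SV in \<open>auto simp: S_def\<close>)
  have sneg: "(\<Sum>x\<in>S. nb E V x - b x) = - (\<Sum>v\<in>S. b v - nb E V v)"
    by (simp add: sum_negf[symmetric])
  have ev: "e2 E V \<ge> 2 * int (card V) - 2" by (rule e2V)
  have s7: "e2 E V \<le> e2 E W + 2 * int (card L)"
  proof -
    have nbu: "\<And>u. nb E V u = nb E W u + nb E L u"
      using nb_union[OF WL finW finL] VWL by simp
    have "e2 E V = (\<Sum>u\<in>V. nb E W u + nb E L u)"
      unfolding e2_def nbu by simp
    also have "\<dots> = (\<Sum>u\<in>V. nb E W u) + (\<Sum>u\<in>V. nb E L u)" by (simp add: sum.distrib)
    also have "(\<Sum>u\<in>V. nb E W u) = e2 E W + (\<Sum>u\<in>L. nb E W u)"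
      unfolding e2_def by (subst VWL) (use WL finW finL in \<open>simp add: sum.union_disjoint\<close>)
    also have "(\<Sum>u\<in>V. nb E L u) = (\<Sum>u\<in>L. nb E V u)"
      by (rule nb_swap) (use fin finL sym in auto)
    finally have eq: "e2 E V = e2 E W + (\<Sum>u\<in>L. nb E W u) + (\<Sum>u\<in>L. nb E V u)" by simp
    have "(\<Sum>u\<in>L. nb E W u) \<le> (\<Sum>u\<in>L. 1)"
    proof (rule sum_mono)
      fix u assume "u \<in> L" then show "nb E W u \<le> 1"
        using nb_mono[OF WV fin, of u] by (auto simp: L_def)
    qed
    moreover have "(\<Sum>u\<in>L. nb E V u) \<le> (\<Sum>u\<in>L. 1)"
      by (rule sum_mono) (auto simp: L_def)
    ultimately show ?thesis using eq by simp
  qed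
  have s8: "e2 E W = e2 E S + 2 * (\<Sum>v\<in>N. nb E S v) + e2 E N"
  proof -
    have nbu: "\<And>u. nb E W u = nb E S u + nb E N u"
      using nb_union[OF SN finS finN] WSN by simp
    have "e2 E W = (\<Sum>u\<in>W. nb E S u + nb E N u)"
      unfolding e2_def by (simp add: nbu)
    also have "\<dots> = (\<Sum>u\<in>S \<union> N. nb E S u + nb E N u)" using WSN by simp
    also have "\<dots> = (\<Sum>u\<in>S. nb E S u) + (\<Sum>u\<in>S. nb E N u) + ((\<Sum>u\<in>N. nb E S u) + (\<Sum>u\<in>N. nb E N u))"
      using SN finS finN by (simp add: sum.union_disjoint sum.distrib)
    also have "(\<Sum>u\<in>S. nb E N u) = (\<Sum>u\<in>N. nb E S u)"
      by (rule nb_swap) (use finS finN sym in auto)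
    finally show ?thesis unfolding e2_def by simp
  qed
  have Bpos: "(\<Sum>v\<in>S. b v - 2) \<ge> 0" and Dpos: "(\<Sum>v\<in>L. b v - 2) \<ge> 0"
    using b2 SV LV by (auto intro!: sum_nonneg)
  have key: "(\<Sum>v\<in>V. g v) \<ge> 0"
  proof (cases "N = {}")
    case False
    have "e2 E N \<le> 2 * int (card N) - 2" by (rule F2[OF NV False])
    then show ?thesis using sumV gS gN gL f3 sneg ev s7 s8 cV Bpos Dpos by linarith
  next
    case True
    have e0: "e2 E N = 0" using True by (simp add: e2_def)
    have cN: "card N = 0" using True by simp
    obtain v0 where v0: "v0 \<in> V" "b v0 \<ge> 3" using b3 by blast
    have "(\<Sum>v\<in>S. b v - 2) + (\<Sum>v\<in>L. b v - 2) \<ge> 1"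
    proof (cases "v0 \<in> S")
      case True
      have "b v0 - 2 \<le> (\<Sum>v\<in>S. b v - 2)"
        by (rule member_le_sum[OF True _ finS]) (use b2 SV in auto)
      then show ?thesis using v0 Dpos by linarith
    next
      case False
      then have "v0 \<in> L" using v0 \<open>N = {}\<close> VWL WSN by blast
      then have "b v0 - 2 \<le> (\<Sum>v\<in>L. b v - 2)"
        by (rule member_le_sum[OF _ _ finL]) (use b2 LV in auto)
      then show ?thesis using v0 Bpos by linarith
    qed
    then show ?thesis using sumV gS gN gL f3 sneg ev s7 s8 cV e0 cN by linarith
  qed
  have "(\<Sum>v\<in>V. g v) = (\<Sum>i\<in>V. Z i * (b i - 2)) - (\<Sum>v\<in>V. f v)"
    by (simp add: g_def sum_subtractf)
  then show ?thesis using key cx by linarith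
qed

end

theorem theorem3:
  fixes V :: "'a set" and E :: "'a \<Rightarrow> 'a \<Rightarrow> bool" and b Z :: "'a \<Rightarrow> int" and m :: int
  assumes "rational_graph V E b Z"
    and "m = - inter V E b Z Z"
    and "m \<ge> 3"
  shows "complexity V E \<le> m - 2"
proof -
  interpret rg V E b Z by (unfold_locales) (rule assms(1))
  have sumeq: "(\<Sum>i\<in>V. Z i * (b i - 2)) = m - 2" using qZ assms(2) unfolding qf_def by linarith
  have "\<exists>v\<in>V. b v \<ge> 3"
  proof (rule ccontr)
    assume "\<not> (\<exists>v\<in>V. b v \<ge> 3)"
    then have "\<forall>v\<in>V. b v = 2" using b2 by force
    then have "(\<Sum>i\<in>V. Z i * (b i - 2)) = 0" by simp
    then show False using sumeq assms(3) by simp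
  qed
  then have "complexity V E \<le> (\<Sum>i\<in>V. Z i * (b i - 2))" by (rule main)
  then show ?thesis using sumeq by simp
qed

end
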